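(* Assume CH. Let $\mathcal{I}$ and $\mathcal{J}$ be ideals such that $\mathcal{I}\subseteq\mathcal{I}'$ for some hereditary weak P-ideal $\mathcal{I}'$ with $\mathcal{J}\not\leq_K\mathcal{I}'$. Then there is a Mr\'owka space in $\mathrm{FinBW}(\mathcal{I})\setminus\mathrm{FinBW}(\mathcal{J})$.
   Context: An ideal on an infinite countable set $X$ is a family $\mathcal{I}\subseteq\mathcal{P}(X)$ closed under subsets and finite unions, containing all finite subsets, with $X\notin\mathcal{I}$. $\mathcal{I}|A=\{B\cap A:B\in\mathcal{I}\}$. A space $X$ is in $\mathrm{FinBW}(\mathcal{I})$ if $X$ is Hausdorff and for every sequence $(x_n)_{n\in\bigcup\mathcal{I}}$ in $X$ there is $A\notin\mathcal{I}$ with $(x_n)_{n\in A}$ convergent in $X$. $\mathcal{J}\leq_K\mathcal{I}$: there is a function $f:\bigcup\mathcal{I}\to\bigcup\mathcal{J}$ with $f^{-1}[B]\in\mathcal{I}$ for all $B\in\mathcal{J}$. $\mathrm{Fin}^2$: ideal on $\omega^2$ of all $A$ with only finitely many $n$ such that $\{m:(n,m)\in A\}$ is infinite. $\mathcal{I}\sqsubseteq\mathcal{J}$: there is a bijection $f:\bigcup\mathcal{J}\to\bigcup\mathcal{I}$ with $f^{-1}[A]\in\mathcal{J}$ for all $A\in\mathcal{I}$. $\mathcal{I}$ is a hereditary weak P-ideal if $\mathrm{Fin}^2\not\sqsubseteq\mathcal{I}|A$ for every $A\notin\mathcal{I}$. A Mr\'owka space is $\Phi(\mathcal{A})$ for an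 infinite almost disjoint family $\mathcal{A}$ of infinite subsets of $\omega$: underlying set $\omega\cup\mathcal{A}\cup\{\infty\}$, points of $\omega$ isolated, basic neighbourhoods of $A\in\mathcal{A}$ are $\{A\}\cup(A\setminus F)$ ($F\subseteq\omega$ finite), of $\infty$ are $\{\infty\}\cup(\mathcal{A}\setminus G)\cup(\omega\setminus(F\cup\bigcup G))$ ($F\subseteq\omega$, $G\subseteq\mathcal{A}$ finite). *)

theory Defs
  imports "HOL-Analysis.Analysis" "HOL-Library.Equipollence"
begin

definition CH :: bool where
  "CH \<longleftrightarrow> (\<forall>S :: nat set set. countable S \<or> S \<approx> (UNIV :: nat set set))"

definition is_ideal :: "'a set \<Rightarrow> 'a set set \<Rightarrow> bool" where
  "is_ideal X I \<longleftrightarrow> countable X \<and> infinite X \<and> I \<subseteq> Pow X \<and>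
     (\<forall>A B. A \<in> I \<and> B \<subseteq> A \<longrightarrow> B \<in> I) \<and>
     (\<forall>A B. A \<in> I \<and> B \<in> I \<longrightarrow> A \<union> B \<in> I) \<and>
     (\<forall>F. F \<subseteq> X \<and> finite F \<longrightarrow> F \<in> I) \<and>
     X \<notin> I"

definition ideal_restr :: "'a set set \<Rightarrow> 'a set \<Rightarrow> 'a set set" where
  "ideal_restr I A = {B \<inter> A | B. B \<in> I}"

definition Fin2 :: "(nat \<times> nat) set set" where
  "Fin2 = {A. finite {n. infinite {m. (n, m) \<in> A}}}"

definition katetov_le :: "'b set set \<Rightarrow> 'a set set \<Rightarrow> bool" where
  "katetov_le J I \<longleftrightarrow> (\<exists>f. (\<forall>x\<in>\<Union>I. f x \<in> \<Union>J) \<and> (\<forall>B\<in>J. {x \<in> \<Union>I. f x \<in> B} \<in> I))"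

definition ideal_sqsub :: "'a set set \<Rightarrow> 'b set set \<Rightarrow> bool" where
  "ideal_sqsub I J \<longleftrightarrow> (\<exists>f. bij_betw f (\<Union>J) (\<Union>I) \<and> (\<forall>A\<in>I. {x \<in> \<Union>J. f x \<in> A} \<in> J))"

definition hereditary_weak_P :: "'a set \<Rightarrow> 'a set set \<Rightarrow> bool" where
  "hereditary_weak_P X I \<longleftrightarrow> (\<forall>A. A \<subseteq> X \<and> A \<notin> I \<longrightarrow> \<not> ideal_sqsub Fin2 (ideal_restr I A))"

definition FinBW :: "'a set \<Rightarrow> 'a set set \<Rightarrow> 'p topology \<Rightarrow> bool" where
  "FinBW X I T \<longleftrightarrow> Hausdorff_space T \<and>
     (\<forall>x. (\<forall>n\<in>X. x n \<in> topspace T) \<longrightarrow>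
        (\<exists>A. A \<subseteq> X \<and> A \<notin> I \<and> (\<exists>L. limitin T x L (inf cofinite (principal A)))))"

definition almost_disjoint_family :: "nat set set \<Rightarrow> bool" where
  "almost_disjoint_family \<A> \<longleftrightarrow> infinite \<A> \<and> (\<forall>A\<in>\<A>. infinite A) \<and>
     (\<forall>A\<in>\<A>. \<forall>B\<in>\<A>. A \<noteq> B \<longrightarrow> finite (A \<inter> B))"

datatype mpt = Pt nat | Ast "nat set" | Infty

definition mrowka_basis :: "nat set set \<Rightarrow> mpt set set" where
  "mrowka_basis \<A> =
     {{Pt n} | n. True} \<union>
     {{Ast A} \<union> Pt ` (A - F) | A F. A \<in> \<A> \<and> finite F} \<union>
     {{Infty} \<union> Ast ` (\<A> - G) \<union> Pt ` (UNIV - (F \<union> \<Union>G)) | F G.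
        finite F \<and> finite G \<and> G \<subseteq> \<A>}"

definition mrowka :: "nat set set \<Rightarrow> mpt topology" where
  "mrowka \<A> = topology_generated_by (mrowka_basis \<A>)"

end

theory Submission
  imports Defs
begin


lemma id_sub: "is_ideal X I \<Longrightarrow> A \<in> I \<Longrightarrow> B \<subseteq> A \<Longrightarrow> B \<in> I"
  unfolding is_ideal_def by blast
lemma id_Un: "is_ideal X I \<Longrightarrow> A \<in> I \<Longrightarrow> B \<in> I \<Longrightarrow> A \<union> B \<in> I"
  unfolding is_ideal_def by blast
lemma id_fin: "is_ideal X I \<Longrightarrow> F \<subseteq> X \<Longrightarrow> finite F \<Longrightarrow> F \<in> I"
  unfolding is_ideal_def by blast
lemma id_X: "is_ideal X I \<Longrightarrow> X \<notin> I"
  unfolding is_ideal_def by blast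
lemma id_Pow: "is_ideal X I \<Longrightarrow> A \<in> I \<Longrightarrow> A \<subseteq> X"
proof -
  assume "is_ideal X I" "A \<in> I"
  moreover have "I \<subseteq> Pow X" using \<open>is_ideal X I\<close> by (simp add: is_ideal_def)
  ultimately show ?thesis by blast
qed
lemma id_countable: "is_ideal X I \<Longrightarrow> countable X"
  unfolding is_ideal_def by blast
lemma id_infinite: "is_ideal X I \<Longrightarrow> infinite X"
  unfolding is_ideal_def by blast
lemma id_empty: "is_ideal X I \<Longrightarrow> {} \<in> I"
  using id_fin by blast
lemma id_Union: "is_ideal X I \<Longrightarrow> \<Union> I = X"
proof -
  assume a: "is_ideal X I"
  have "x \<in> \<Union>I" if "x \<in> X" for x using id_fin[OF a, of "{x}"] that by blast
  then show ?thesis using id_Pow[OF a] by blast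
qed
lemma id_finite_UN: assumes ide: "is_ideal X I" shows "finite K \<Longrightarrow> (\<And>k. k \<in> K \<Longrightarrow> f k \<in> I) \<Longrightarrow> (\<Union>k\<in>K. f k) \<in> I"
proof (induction K rule: finite_induct)
  case empty then show ?case using id_empty[OF ide] by simp
next
  case (insert x F) then show ?case using id_Un[OF ide, of "f x"] by simp
qed
lemma id_pos_infinite: "is_ideal X I \<Longrightarrow> A \<subseteq> X \<Longrightarrow> A \<notin> I \<Longrightarrow> infinite A"
  using id_fin by blast

lemma WP:
  assumes ide: "is_ideal X I" and hw: "hereditary_weak_P X I" and A0X: "A0 \<subseteq> X" and A0I: "A0 \<notin> I"
    and fib: "\<And>i. {n\<in>A0. k n = (i::nat)} \<in> I"
  shows "\<exists>C\<subseteq>A0. C \<notin> I \<and> (\<forall>i. finite {n\<in>C. k n = i})"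
proof (rule ccontr)
  assume H0: "\<not> ?thesis"
  have H: "C \<in> I" if "C \<subseteq> A0" "\<And>i. finite {n\<in>C. k n = i}" for C
    using H0 that by blast
  define E where "E i = {n\<in>A0. k n = i}" for i
  define N where "N = {i. infinite (E i)}"
  have EI: "E i \<in> I" for i using fib E_def by simp
  have finUN: "{n\<in>A0. k n \<in> K} \<in> I" if "finite K" for K
  proof -
    have "{n\<in>A0. k n \<in> K} = (\<Union>i\<in>K. E i)" unfolding E_def by blast
    then show ?thesis using id_finite_UN[OF ide that, of E] EI by simp
  qed
  have restI: "{n\<in>A0. k n \<notin> N} \<in> I"
  proof (rule H)
    fix i
    show "finite {n \<in> {n \<in> A0. k n \<notin> N}. k n = i}"
    proof (cases "i \<in> N")
      case True
      then have "{n \<in> {n \<in> A0. k n \<notin> N}. k n = i} = {}" by auto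
      then show ?thesis using finite.emptyI by metis
    next
      case False
      then have "finite (E i)" unfolding N_def by simp
      then show ?thesis unfolding E_def by (rule finite_subset[rotated]) auto
    qed
  qed auto
  have infN: "infinite N"
  proof
    assume "finite N"
    then have "{n\<in>A0. k n \<in> N} \<in> I" by (rule finUN)
    from id_Un[OF ide this restI] have "A0 \<in> I"
      by (rule id_sub[OF ide]) auto
    with A0I show False by simp
  qed
  define A where "A = {n\<in>A0. k n \<in> N}"
  have AI: "A \<notin> I"
  proof
    assume "A \<in> I"
    from id_Un[OF ide this restI] have "A0 \<in> I"
      by (rule id_sub[OF ide]) (auto simp: A_def)
    with A0I show False by simp
  qed
  have AX: "A \<subseteq> X" using A0X A_def by auto
  have cX: "countable X" using id_countable[OF ide] .
  obtain \<nu> where nu: "bij_betw \<nu> (UNIV::nat set) N"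
    using countable_infiniteE'[OF countableI_type infN] by blast
  have cE: "countable (E i)" for i
  proof -
    have "E i \<subseteq> X" using A0X unfolding E_def by blast
    then show ?thesis using countable_subset cX by blast
  qed
  have rng: "\<nu> ` UNIV = N" using nu by (simp add: bij_betw_def)
  have injnu: "inj \<nu>" using nu by (simp add: bij_betw_def)
  define \<phi> where "\<phi> n = (inv_into UNIV \<nu> (k n), to_nat_on (E (k n)) n)" for n
  have bphi: "bij_betw \<phi> A UNIV"
  proof (rule bij_betw_imageI)
    show "inj_on \<phi> A"
    proof
      fix n m assume nA: "n \<in> A" and mA: "m \<in> A" and eq: "\<phi> n = \<phi> m"
      have "inv_into UNIV \<nu> (k n) = inv_into UNIV \<nu> (k m)" using eq \<phi>_def by simp
      moreover have "k n \<in> \<nu> ` UNIV" "k m \<in> \<nu> ` UNIV" using nA mA rng unfolding A_def by auto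
      ultimately have kk: "k n = k m" by (metis f_inv_into_f)
      then have "to_nat_on (E (k n)) n = to_nat_on (E (k n)) m" using eq \<phi>_def by simp
      moreover have "n \<in> E (k n)" "m \<in> E (k n)" using nA mA kk unfolding A_def E_def by auto
      ultimately show "n = m" using inj_on_to_nat_on[OF cE] by (meson inj_onD)
    qed
  next
    show "\<phi> ` A = UNIV"
    proof (safe)
      fix p q :: nat
      define i where "i = \<nu> p"
      have iN: "i \<in> N" using nu i_def by (auto simp: bij_betw_def)
      then have infE: "infinite (E i)" using N_def by simp
      define n where "n = from_nat_into (E i) q"
      have nE: "n \<in> E i" using from_nat_into[of "E i" q] infE n_def by fastforce
      then have kn: "k n = i" by (simp add: E_def)
      have nA: "n \<in> A" using nE iN unfolding A_def E_def by auto
      have "inv_into UNIV \<nu> i = p" using i_def injnu by (simp add: inv_into_f_f)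
      moreover have "to_nat_on (E i) n = q" using n_def infE cE by simp
      ultimately have "\<phi> n = (p, q)" using kn by (simp add: \<phi>_def)
      with nA show "(p, q) \<in> \<phi> ` A" by force
    qed simp
  qed
  have UI: "\<Union>(ideal_restr I A) = A"
  proof -
    have "x \<in> \<Union>(ideal_restr I A)" if "x \<in> A" for x
      using id_fin[OF ide, of "{x}"] that AX unfolding ideal_restr_def by blast
    then show ?thesis unfolding ideal_restr_def by blast
  qed
  have UF: "\<Union>Fin2 = UNIV"
  proof -
    have "x \<in> \<Union>Fin2" for x
    proof -
      have "finite {m. (n, m) \<in> {x}}" for n by (rule finite_subset[of _ "{snd x}"]) auto
      then have "{n. infinite {m. (n, m) \<in> {x}}} = {}" by auto
      then have "{x} \<in> Fin2" unfolding Fin2_def by simp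
      then show ?thesis by blast
    qed
    then show ?thesis by blast
  qed
  have pre: "{n\<in>A. \<phi> n \<in> F} \<in> I" if "F \<in> Fin2" for F
  proof -
    define K where "K = {p. infinite {q. (p, q) \<in> F}}"
    have fK: "finite K" using that unfolding Fin2_def K_def by simp
    have sub: "{n\<in>A. \<phi> n \<in> F} \<subseteq> {n\<in>A0. k n \<in> \<nu> ` K} \<union> {n\<in>A. fst (\<phi> n) \<notin> K \<and> \<phi> n \<in> F}"
    proof
      fix n assume n: "n \<in> {n\<in>A. \<phi> n \<in> F}"
      show "n \<in> {n\<in>A0. k n \<in> \<nu> ` K} \<union> {n\<in>A. fst (\<phi> n) \<notin> K \<and> \<phi> n \<in> F}"
      proof (cases "fst (\<phi> n) \<in> K")
        case True
        have "k n \<in> N" using n A_def by simp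
        then have "\<nu> (fst (\<phi> n)) = k n" using rng
          by (simp add: \<phi>_def f_inv_into_f)
        then show ?thesis using True n A_def by force
      qed (use n in auto)
    qed
    have I1: "{n\<in>A0. k n \<in> \<nu> ` K} \<in> I" using finUN fK by blast
    have I2: "{n\<in>A. fst (\<phi> n) \<notin> K \<and> \<phi> n \<in> F} \<in> I"
    proof (rule H)
      show "{n\<in>A. fst (\<phi> n) \<notin> K \<and> \<phi> n \<in> F} \<subseteq> A0" using A_def by auto
    next
      fix i
      show "finite {n \<in> {n\<in>A. fst (\<phi> n) \<notin> K \<and> \<phi> n \<in> F}. k n = i}"
      proof (cases "i \<in> N")
        case False
        then have "finite (E i)" unfolding N_def by simp
        then show ?thesis unfolding E_def A_def by (rule finite_subset[rotated]) auto
      next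
        case True
        define p where "p = inv_into UNIV \<nu> i"
        let ?S = "{n \<in> {n\<in>A. fst (\<phi> n) \<notin> K \<and> \<phi> n \<in> F}. k n = i}"
        have "finite {q. (p, q) \<in> F}" if "p \<notin> K" using that K_def by simp
        have S1: "?S \<subseteq> E i" unfolding E_def A_def by auto
        have S2: "to_nat_on (E i) ` ?S \<subseteq> {q. (p, q) \<in> F}"
          by (auto simp: \<phi>_def p_def)
        have S3: "?S = {} \<or> p \<notin> K"
          by (auto simp: \<phi>_def p_def)
        show ?thesis
        proof (cases "?S = {}")
          case False
          then have "p \<notin> K" using S3 by blast
          then have "finite {q. (p, q) \<in> F}" using K_def by simp
          then have "finite (to_nat_on (E i) ` ?S)" using S2 finite_subset by blast
          moreover have "inj_on (to_nat_on (E i)) ?S"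
            using inj_on_subset[OF inj_on_to_nat_on[OF cE] S1] .
          ultimately show ?thesis using finite_imageD by blast
        qed (metis finite.emptyI)
      qed
    qed
    have "{n\<in>A. \<phi> n \<in> F} \<in> I" using id_sub[OF ide id_Un[OF ide I1 I2] sub] .
    then show ?thesis .
  qed
  have "ideal_sqsub Fin2 (ideal_restr I A)"
    unfolding ideal_sqsub_def UI UF
  proof (intro exI conjI ballI)
    show "bij_betw \<phi> A UNIV" by (rule bphi)
  next
    fix F assume "F \<in> Fin2"
    then have "{n\<in>A. \<phi> n \<in> F} \<in> I" by (rule pre)
    moreover have "{n\<in>A. \<phi> n \<in> F} = {n\<in>A. \<phi> n \<in> F} \<inter> A" by blast
    ultimately show "{x \<in> A. \<phi> x \<in> F} \<in> ideal_restr I A" unfolding ideal_restr_def by blast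
  qed
  moreover have "\<not> ideal_sqsub Fin2 (ideal_restr I A)"
    using hw AX AI unfolding hereditary_weak_P_def by simp
  ultimately show False by simp
qed



definition ADF :: "nat set set \<Rightarrow> bool" where
  "ADF \<A> \<longleftrightarrow> (\<forall>A\<in>\<A>. infinite A) \<and> (\<forall>A\<in>\<A>. \<forall>B\<in>\<A>. A \<noteq> B \<longrightarrow> finite (A \<inter> B))"

lemma basis_Pt: "{Pt n} \<in> mrowka_basis \<A>"
  unfolding mrowka_basis_def by (intro UnI1) blast
lemma basis_Ast: "A \<in> \<A> \<Longrightarrow> finite F \<Longrightarrow> {Ast A} \<union> Pt ` (A - F) \<in> mrowka_basis \<A>"
  unfolding mrowka_basis_def by (intro UnI1 UnI2) blast
lemma basis_Inf: "finite F \<Longrightarrow> finite G \<Longrightarrow> G \<subseteq> \<A> \<Longrightarrow>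
   {Infty} \<union> Ast ` (\<A> - G) \<union> Pt ` (UNIV - (F \<union> \<Union>G)) \<in> mrowka_basis \<A>"
  unfolding mrowka_basis_def by (intro UnI2) blast

lemma topspace_mrowka: "topspace (mrowka \<A>) = range Pt \<union> Ast ` \<A> \<union> {Infty}"
proof -
  have "\<Union>(mrowka_basis \<A>) \<subseteq> range Pt \<union> Ast ` \<A> \<union> {Infty}"
    unfolding mrowka_basis_def by blast
  moreover have "range Pt \<subseteq> \<Union>(mrowka_basis \<A>)" using basis_Pt by blast
  moreover have "Ast ` \<A> \<subseteq> \<Union>(mrowka_basis \<A>)"
  proof
    fix y assume "y \<in> Ast ` \<A>"
    then obtain A where "A \<in> \<A>" "y = Ast A" by blast
    then show "y \<in> \<Union>(mrowka_basis \<A>)" using basis_Ast[of A \<A> "{}"] by blast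
  qed
  moreover have "Infty \<in> \<Union>(mrowka_basis \<A>)" using basis_Inf[of "{}" "{}" \<A>] by blast
  ultimately show ?thesis unfolding mrowka_def topology_generated_by_topspace by blast
qed

lemma open_basis: "B \<in> mrowka_basis \<A> \<Longrightarrow> openin (mrowka \<A>) B"
  unfolding mrowka_def by (rule topology_generated_by_Basis)

lemma limit_via_basis:
  assumes L: "L \<in> topspace (mrowka \<A>)"
    and H: "\<And>B. B \<in> mrowka_basis \<A> \<Longrightarrow> L \<in> B \<Longrightarrow> eventually (\<lambda>n. x n \<in> B) F"
  shows "limitin (mrowka \<A>) x L F"
  unfolding limitin_def
proof (intro conjI allI impI)
  show "L \<in> topspace (mrowka \<A>)" by (rule L)
next
  fix U assume "openin (mrowka \<A>) U \<and> L \<in> U"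
  then have g: "generate_topology_on (mrowka_basis \<A>) U" and LU: "L \<in> U"
    unfolding mrowka_def openin_topology_generated_by_iff by auto
  from g LU show "eventually (\<lambda>n. x n \<in> U) F"
  proof (induction rule: generate_topology_on.induct)
    case Empty then show ?case by simp
  next
    case (Int a b) then show ?case by (simp add: eventually_conj)
  next
    case (UN K)
    then obtain k where "k \<in> K" "L \<in> k" by blast
    with UN.IH have "eventually (\<lambda>n. x n \<in> k) F" by blast
    then show ?case by (rule eventually_mono) (use \<open>k \<in> K\<close> in blast)
  next
    case (Basis s) then show ?case using H by blast
  qed
qed

definition sepr :: "nat set set \<Rightarrow> mpt \<Rightarrow> mpt \<Rightarrow> bool" where
  "sepr \<A> p q \<longleftrightarrow> (\<exists>U V. openin (mrowka \<A>) U \<and> openin (mrowka \<A>) V \<and> p \<in> U \<and> q \<in> V \<and> disjnt U V)"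

lemma sepr_sym: "sepr \<A> p q \<Longrightarrow> sepr \<A> q p"
  unfolding sepr_def by (meson disjnt_sym)

lemma sepr_basis: "U \<in> mrowka_basis \<A> \<Longrightarrow> V \<in> mrowka_basis \<A> \<Longrightarrow> p \<in> U \<Longrightarrow> q \<in> V \<Longrightarrow> U \<inter> V = {} \<Longrightarrow> sepr \<A> p q"
  unfolding sepr_def disjnt_def using open_basis by blast

lemma sep_Pt:
  assumes "q \<in> range Pt \<union> Ast ` \<A> \<union> {Infty}" "q \<noteq> Pt n"
  shows "sepr \<A> (Pt n) q"
proof -
  consider m where "q = Pt m" "m \<noteq> n" | A where "q = Ast A" "A \<in> \<A>" | "q = Infty" using assms by blast
  then show ?thesis
  proof cases
    case 1 then show ?thesis by (intro sepr_basis[OF basis_Pt basis_Pt]) auto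
  next
    case (2 A) then show ?thesis
      by (intro sepr_basis[OF basis_Pt basis_Ast[of A \<A> "{n}"]]) auto
  next
    case 3 then show ?thesis
      by (intro sepr_basis[OF basis_Pt basis_Inf[of "{n}" "{}" \<A>]]) auto
  qed
qed

lemma sep_Ast_Ast:
  assumes ad: "ADF \<A>" and "A \<in> \<A>" "B \<in> \<A>" "A \<noteq> B"
  shows "sepr \<A> (Ast A) (Ast B)"
proof -
  have f: "finite (A \<inter> B)" using ad assms unfolding ADF_def by blast
  show ?thesis
    by (rule sepr_basis[OF basis_Ast[OF \<open>A \<in> \<A>\<close> f] basis_Ast[OF \<open>B \<in> \<A>\<close> f]]) (use assms in auto)
qed

lemma sep_Ast_Inf:
  assumes "A \<in> \<A>"
  shows "sepr \<A> (Ast A) Infty"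
  by (rule sepr_basis[OF basis_Ast[OF assms, of "{}"] basis_Inf[of "{}" "{A}" \<A>]]) (use assms in auto)

lemma hausdorff_mrowka:
  assumes ad: "ADF \<A>"
  shows "Hausdorff_space (mrowka \<A>)"
  unfolding Hausdorff_space_def
proof (intro allI impI)
  fix p q assume pq: "p \<in> topspace (mrowka \<A>) \<and> q \<in> topspace (mrowka \<A>) \<and> p \<noteq> q"
  then have p: "p \<in> range Pt \<union> Ast ` \<A> \<union> {Infty}" and q: "q \<in> range Pt \<union> Ast ` \<A> \<union> {Infty}"
    and ne: "p \<noteq> q" by (auto simp: topspace_mrowka)
  have "sepr \<A> p q"
  proof (cases p)
    case (Pt n) then show ?thesis using sep_Pt[OF q, of n] ne by simp
  next
    case (Ast A)
    then have A: "A \<in> \<A>" using p by auto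
    show ?thesis
    proof (cases q)
      case (Pt m) then show ?thesis using sepr_sym[OF sep_Pt[OF p, of m]] ne by simp
    next
      case (Ast B)
      then have B: "B \<in> \<A>" using q by auto
      have "A \<noteq> B" using ne Ast \<open>p = Ast A\<close> by simp
      then show ?thesis using sep_Ast_Ast[OF ad A B] Ast \<open>p = Ast A\<close> by simp
    next
      case Infty then show ?thesis using sep_Ast_Inf[OF A] \<open>p = Ast A\<close> by simp
    qed
  next
    case Infty
    show ?thesis
    proof (cases q)
      case (Pt m) then show ?thesis using sepr_sym[OF sep_Pt[OF p, of m]] ne by simp
    next
      case (Ast B)
      then have B: "B \<in> \<A>" using q by auto
      then show ?thesis using sepr_sym[OF sep_Ast_Inf[OF B]] Ast Infty by simp
    next
      case Infty then show ?thesis using ne \<open>p = Infty\<close> by simp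
    qed
  qed
  then show "\<exists>U V. openin (mrowka \<A>) U \<and> openin (mrowka \<A>) V \<and> p \<in> U \<and> q \<in> V \<and> disjnt U V"
    unfolding sepr_def .
qed



lemma basis_cases:
  assumes "B \<in> mrowka_basis \<A>"
  obtains n where "B = {Pt n}"
  | A F where "A \<in> \<A>" "finite F" "B = {Ast A} \<union> Pt ` (A - F)"
  | F G where "finite F" "finite G" "G \<subseteq> \<A>" "B = {Infty} \<union> Ast ` (\<A> - G) \<union> Pt ` (UNIV - (F \<union> \<Union>G))"
  using assms unfolding mrowka_basis_def by (auto simp only: Un_iff mem_Collect_eq)

lemma fin_pre:
  assumes "\<And>i. finite {n\<in>C. z n = (i::nat)}" "finite S"
  shows "finite {n\<in>C. z n \<in> S}"
proof -
  have "{n\<in>C. z n \<in> S} = (\<Union>m\<in>S. {n\<in>C. z n = m})" by blast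
  then show ?thesis using assms by simp
qed

lemma ev_lemma:
  assumes "finite {n\<in>C. x n \<notin> B}"
  shows "eventually (\<lambda>n. x n \<in> B) (inf cofinite (principal C))"
  unfolding eventually_inf_principal eventually_cofinite
proof -
  have "{n. \<not> (n \<in> C \<longrightarrow> x n \<in> B)} = {n\<in>C. x n \<notin> B}" by blast
  then show "finite {n. \<not> (n \<in> C \<longrightarrow> x n \<in> B)}" using assms by simp
qed

definition handled :: "'a set \<Rightarrow> 'a set set \<Rightarrow> ('a \<Rightarrow> nat) \<Rightarrow> nat set set \<Rightarrow> bool" where
  "handled X I' z \<A> \<longleftrightarrow> (\<exists>i. {n\<in>X. z n = i} \<notin> I') \<or>
     (\<exists>C\<subseteq>X. C \<notin> I' \<and> (\<forall>i. finite {n\<in>C. z n = i}) \<and> (\<exists>A\<in>\<A>. finite {n\<in>C. z n \<notin> A}))"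

lemma finbw_I:
  assumes ideI: "is_ideal X I" and ide: "is_ideal X I'" and II: "I \<subseteq> I'"
    and hw: "hereditary_weak_P X I'" and ad: "ADF \<A>"
    and hd: "\<And>z. handled X I' z \<A>"
  shows "FinBW X I (mrowka \<A>)"
  unfolding FinBW_def
proof (intro conjI allI impI)
  show "Hausdorff_space (mrowka \<A>)" using hausdorff_mrowka[OF ad] .
next
  fix x :: "'a \<Rightarrow> mpt"
  assume xs: "\<forall>n\<in>X. x n \<in> topspace (mrowka \<A>)"
  have "\<exists>C. C \<subseteq> X \<and> C \<notin> I' \<and> (\<exists>L. limitin (mrowka \<A>) x L (inf cofinite (principal C)))"
  proof (cases "\<exists>p. {n\<in>X. x n = p} \<notin> I'")
    case True
    then obtain p where pC: "{n\<in>X. x n = p} \<notin> I'" by blast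
    have "{n\<in>X. x n = p} \<noteq> {}" using pC id_empty[OF ide] by metis
    then obtain n0 where "n0 \<in> X" "x n0 = p" by blast
    then have pt: "p \<in> topspace (mrowka \<A>)" using xs by blast
    have "limitin (mrowka \<A>) x p (inf cofinite (principal {n\<in>X. x n = p}))"
    proof (rule limit_via_basis[OF pt])
      fix B assume "p \<in> B"
      then show "eventually (\<lambda>n. x n \<in> B) (inf cofinite (principal {n\<in>X. x n = p}))"
      proof (intro ev_lemma)
        have "{n \<in> {n\<in>X. x n = p}. x n \<notin> B} = {}" using \<open>p \<in> B\<close> by blast
        then show "finite {n \<in> {n\<in>X. x n = p}. x n \<notin> B}" by (metis finite.emptyI)
      qed
    qed
    moreover have "{n\<in>X. x n = p} \<subseteq> X" by blast
    ultimately show ?thesis using pC by (intro exI[of _ "{n\<in>X. x n = p}"]) blast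
  next
    case False
    then have fibI: "\<And>p. {n\<in>X. x n = p} \<in> I'" by blast
    define Q where "Q = {n\<in>X. x n \<notin> range Pt}"
    show ?thesis
    proof (cases "Q \<in> I'")
      case False
      have cxX: "countable (x ` X)" using id_countable[OF ide] by simp
      define k where "k n = to_nat_on (x ` X) (x n)" for n
      have kfib: "{n\<in>Q. k n = i} \<in> I'" for i
      proof -
        have "{n\<in>Q. k n = i} \<subseteq> {n\<in>X. x n = from_nat_into (x ` X) i}"
          using cxX by (auto simp: Q_def k_def)
        then show ?thesis using id_sub[OF ide fibI] by blast
      qed
      obtain C where CQ: "C \<subseteq> Q" and CI: "C \<notin> I'" and Cf: "\<And>i. finite {n\<in>C. k n = i}"
        using WP[OF ide hw _ False kfib] Q_def by blast
      have xfin: "finite {n\<in>C. x n = p}" for p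
        by (rule finite_subset[OF _ Cf[of "to_nat_on (x ` X) p"]]) (auto simp: k_def)
      have it: "Infty \<in> topspace (mrowka \<A>)" by (simp add: topspace_mrowka)
      have "limitin (mrowka \<A>) x Infty (inf cofinite (principal C))"
      proof (rule limit_via_basis[OF it])
        fix B assume B: "B \<in> mrowka_basis \<A>" and iB: "Infty \<in> B"
        from B show "eventually (\<lambda>n. x n \<in> B) (inf cofinite (principal C))"
        proof (cases rule: basis_cases)
          case (1 n) then show ?thesis using iB by auto
        next
          case (2 A F) then show ?thesis using iB by auto
        next
          case (3 F G)
          have "{n\<in>C. x n \<notin> B} \<subseteq> {n\<in>C. x n \<in> Ast ` G}"
          proof safe
            fix n assume n: "n \<in> C" "x n \<notin> B"
            then have "n \<in> X" "x n \<notin> range Pt" using CQ Q_def by auto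
            then have "x n \<in> Ast ` \<A> \<union> {Infty}" using xs topspace_mrowka by blast
            then show "x n \<in> Ast ` G" using n(2) 3 by auto
          qed
          moreover have "{n\<in>C. x n \<in> Ast ` G} = (\<Union>A\<in>G. {n\<in>C. x n = Ast A})" by blast
          moreover have "finite (\<Union>A\<in>G. {n\<in>C. x n = Ast A})" using 3 xfin by simp
          ultimately show ?thesis by (intro ev_lemma) (metis (no_types, lifting) finite_subset)
        qed
      qed
      then show ?thesis using CQ CI Q_def by blast
    next
      case True
      define z where "z n = (case x n of Pt m \<Rightarrow> m | _ \<Rightarrow> 0)" for n
      have zfib: "{n\<in>X. z n = i} \<in> I'" for i
      proof -
        have "{n\<in>X. z n = i} \<subseteq> {n\<in>X. x n = Pt i} \<union> Q"
          by (auto simp: z_def Q_def split: mpt.splits) (metis mpt.exhaust)+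
        then show ?thesis using id_sub[OF ide id_Un[OF ide fibI True]] by blast
      qed
      then obtain C A where CX: "C \<subseteq> X" and CI: "C \<notin> I'" and Cf: "\<And>i. finite {n\<in>C. z n = i}"
        and A: "A \<in> \<A>" and CA: "finite {n\<in>C. z n \<notin> A}"
        using hd[of z] unfolding handled_def by blast
      define C' where "C' = C - Q"
      have C'I: "C' \<notin> I'"
      proof
        assume "C' \<in> I'"
        then have "C \<in> I'" using id_sub[OF ide id_Un[OF ide \<open>C' \<in> I'\<close> True]] C'_def by blast
        then show False using CI by simp
      qed
      have xC': "x n = Pt (z n)" if "n \<in> C'" for n
        using that CX unfolding C'_def Q_def z_def by auto
      have at: "Ast A \<in> topspace (mrowka \<A>)" using A by (simp add: topspace_mrowka)
      have "limitin (mrowka \<A>) x (Ast A) (inf cofinite (principal C'))"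
      proof (rule limit_via_basis[OF at])
        fix B assume B: "B \<in> mrowka_basis \<A>" and iB: "Ast A \<in> B"
        from B show "eventually (\<lambda>n. x n \<in> B) (inf cofinite (principal C'))"
        proof (cases rule: basis_cases)
          case (1 n) then show ?thesis using iB by auto
        next
          case (2 A' F)
          then have AA: "A' = A" using iB by auto
          have "{n\<in>C'. x n \<notin> B} \<subseteq> {n\<in>C. z n \<notin> A} \<union> {n\<in>C. z n \<in> F}"
            using xC' 2 AA C'_def by auto
          moreover have "finite {n\<in>C. z n \<in> F}" using fin_pre[OF Cf \<open>finite F\<close>] .
          ultimately show ?thesis using CA by (intro ev_lemma) (meson finite_UnI finite_subset)
        next
          case (3 F G)
          have AG: "A \<notin> G" using iB 3 by auto
          define S where "S = F \<union> (\<Union>B'\<in>G. A \<inter> B')"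
          have fAB: "finite (A \<inter> B')" if "B' \<in> G" for B'
          proof -
            have "B' \<in> \<A>" "A \<noteq> B'" using that AG 3 by auto
            then show ?thesis using ad A unfolding ADF_def by blast
          qed
          have "finite (\<Union>B'\<in>G. A \<inter> B')" using \<open>finite G\<close> fAB by (intro finite_UN_I)
          then have fS: "finite S" unfolding S_def using \<open>finite F\<close> by simp
          have "{n\<in>C'. x n \<notin> B} \<subseteq> {n\<in>C. z n \<notin> A} \<union> {n\<in>C. z n \<in> S}"
            using xC' 3 C'_def S_def by auto
          moreover have "finite {n\<in>C. z n \<in> S}" using fin_pre[OF Cf fS] .
          ultimately show ?thesis using CA by (intro ev_lemma) (meson finite_UnI finite_subset)
        qed
      qed
      then show ?thesis using C'I CX C'_def by blast
    qed
  qed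
  then obtain C L where "C \<subseteq> X" "C \<notin> I'" "limitin (mrowka \<A>) x L (inf cofinite (principal C))" by blast
  moreover have "C \<notin> I" using II \<open>C \<notin> I'\<close> by blast
  ultimately show "\<exists>A\<subseteq>X. A \<notin> I \<and> (\<exists>L. limitin (mrowka \<A>) x L (inf cofinite (principal A)))" by blast
qed



definition J0 :: "'b set \<Rightarrow> 'b set set \<Rightarrow> ('b \<Rightarrow> nat) \<Rightarrow> nat set set" where
  "J0 Y J g = {D. {n\<in>Y. g n \<in> D} \<in> J}"

lemma J0_sub: "is_ideal Y J \<Longrightarrow> D \<in> J0 Y J g \<Longrightarrow> E \<subseteq> D \<Longrightarrow> E \<in> J0 Y J g"
  unfolding J0_def by (auto elim!: id_sub)

lemma J0_Un: "is_ideal Y J \<Longrightarrow> D \<in> J0 Y J g \<Longrightarrow> E \<in> J0 Y J g \<Longrightarrow> D \<union> E \<in> J0 Y J g"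
proof -
  assume a: "is_ideal Y J" "D \<in> J0 Y J g" "E \<in> J0 Y J g"
  have "{n\<in>Y. g n \<in> D \<union> E} = {n\<in>Y. g n \<in> D} \<union> {n\<in>Y. g n \<in> E}" by blast
  then show ?thesis using a id_Un[OF a(1)] unfolding J0_def by simp
qed

lemma J0_fin: "is_ideal Y J \<Longrightarrow> inj_on g Y \<Longrightarrow> finite D \<Longrightarrow> D \<in> J0 Y J g"
proof -
  assume a: "is_ideal Y J" "inj_on g Y" "finite D"
  have "{n\<in>Y. g n \<in> D} = g -` D \<inter> Y" by blast
  then have fD: "finite {n\<in>Y. g n \<in> D}" using finite_vimage_IntI[OF a(3) a(2)] by simp
  have "{n\<in>Y. g n \<in> D} \<in> J" by (rule id_fin[OF a(1) _ fD]) blast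
  then show ?thesis unfolding J0_def by simp
qed

lemma J0_UNIV: "is_ideal Y J \<Longrightarrow> UNIV \<notin> J0 Y J g"
  unfolding J0_def using id_X by auto

lemma kat_nat:
  assumes ide: "is_ideal X I'" and ideJ: "is_ideal Y J" and nk: "\<not> katetov_le J I'"
    and g: "bij_betw g Y UNIV"
  shows "\<exists>D\<in>J0 Y J g. {n\<in>X. z n \<in> D} \<notin> I'"
proof (rule ccontr)
  assume "\<not> ?thesis"
  then have H: "\<And>D. D \<in> J0 Y J g \<Longrightarrow> {n\<in>X. z n \<in> D} \<in> I'" by blast
  define f where "f x = inv_into Y g (z x)" for x
  have gY: "g ` Y = UNIV" and gi: "inj_on g Y" using g by (auto simp: bij_betw_def)
  have fY: "f x \<in> Y" for x unfolding f_def using gY by (metis UNIV_I inv_into_into)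
  have "katetov_le J I'"
    unfolding katetov_le_def id_Union[OF ide] id_Union[OF ideJ]
  proof (intro exI conjI ballI)
    fix x show "f x \<in> Y" by (rule fY)
  next
    fix B assume B: "B \<in> J"
    have BY: "B \<subseteq> Y" using id_Pow[OF ideJ B] .
    have "{n\<in>Y. g n \<in> g ` B} \<subseteq> B"
      using BY gi by (auto dest: inj_onD)
    then have "g ` B \<in> J0 Y J g" unfolding J0_def using id_sub[OF ideJ B] by blast
    then have "{n\<in>X. z n \<in> g ` B} \<in> I'" by (rule H)
    moreover have "{x\<in>X. f x \<in> B} \<subseteq> {n\<in>X. z n \<in> g ` B}"
    proof safe
      fix x assume "x \<in> X" "f x \<in> B"
      moreover have "g (f x) = z x" unfolding f_def using gY by (metis UNIV_I f_inv_into_f)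
      ultimately show "z x \<in> g ` B" by (metis imageI)
    qed
    ultimately show "{x\<in>X. f x \<in> B} \<in> I'" using id_sub[OF ide] by blast
  qed
  with nk show False by simp
qed

lemma K1:
  assumes ide: "is_ideal X I'" and sub: "\<And>D E. D \<in> JJ \<Longrightarrow> E \<subseteq> D \<Longrightarrow> E \<in> JJ"
    and fin: "\<And>D. finite D \<Longrightarrow> D \<in> JJ"
    and KN: "\<And>z::'a \<Rightarrow> nat. \<exists>D\<in>JJ. {n\<in>X. z n \<in> D} \<notin> I'"
    and D: "D \<notin> JJ"
  shows "\<exists>E\<subseteq>D. infinite E \<and> E \<in> JJ"
proof -
  have infD: "infinite D" using fin D by blast
  have cX: "countable X" using id_countable[OF ide] .
  define z where "z n = from_nat_into D (to_nat_on X n)" for n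
  have zD: "z n \<in> D" for n unfolding z_def using infD by (metis from_nat_into infinite_imp_nonempty)
  have bD: "bij_betw (from_nat_into D) UNIV D" using bij_betw_from_nat_into[OF countableI_type infD] .
  have zi: "inj_on z X"
  proof
    fix a b assume "a \<in> X" "b \<in> X" "z a = z b"
    then have "to_nat_on X a = to_nat_on X b" using bD unfolding z_def bij_betw_def by (meson UNIV_I inj_onD)
    then show "a = b" using inj_on_to_nat_on[OF cX] \<open>a \<in> X\<close> \<open>b \<in> X\<close> by (meson inj_onD)
  qed
  obtain D' where D': "D' \<in> JJ" and P: "{n\<in>X. z n \<in> D'} \<notin> I'" using KN[of z] by blast
  define P where "P = {n\<in>X. z n \<in> D'}"
  have infP: "infinite P" using id_pos_infinite[OF ide _ P] P_def by blast
  have "infinite (z ` P)"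
  proof
    assume "finite (z ` P)"
    moreover have "inj_on z P" by (rule inj_on_subset[OF zi]) (simp add: P_def)
    ultimately have "finite P" using finite_imageD by blast
    with infP show False by simp
  qed
  moreover have "z ` P \<subseteq> D" using zD by blast
  moreover have "z ` P \<in> JJ" by (rule sub[OF D']) (auto simp: P_def)
  ultimately show ?thesis by blast
qed

lemma mad_ext:
  assumes Kx: "\<And>D. D \<notin> JJ \<Longrightarrow> \<exists>E\<subseteq>D. infinite E \<and> E \<in> JJ"
    and ad0: "ADF \<A>0" and sub0: "\<A>0 \<subseteq> JJ"
  shows "\<exists>\<A>. \<A>0 \<subseteq> \<A> \<and> ADF \<A> \<and> \<A> \<subseteq> JJ \<and> (\<forall>D. D \<notin> JJ \<longrightarrow> (\<exists>A\<in>\<A>. infinite (D \<inter> A)))"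
proof -
  define P2 where "P2 = {\<B>. ADF (\<A>0 \<union> \<B>) \<and> \<B> \<subseteq> JJ}"
  have "\<forall>C\<in>chains P2. \<Union>C \<in> P2"
  proof
    fix C assume C: "C \<in> chains P2"
    have CP: "\<And>\<B>. \<B> \<in> C \<Longrightarrow> ADF (\<A>0 \<union> \<B>) \<and> \<B> \<subseteq> JJ" using chainsD2[OF C] P2_def by blast
    have inf: "\<forall>A\<in>\<A>0 \<union> \<Union>C. infinite A"
      using ad0 CP unfolding ADF_def by blast
    have pair: "finite (A \<inter> B)" if A: "A \<in> \<A>0 \<union> \<Union>C" and B: "B \<in> \<A>0 \<union> \<Union>C" and ne: "A \<noteq> B" for A B
    proof -
      have "\<exists>\<B>. ADF (\<A>0 \<union> \<B>) \<and> A \<in> \<A>0 \<union> \<B> \<and> B \<in> \<A>0 \<union> \<B>"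
      proof (cases "A \<in> \<A>0")
        case True
        show ?thesis
        proof (cases "B \<in> \<A>0")
          case True then show ?thesis using \<open>A \<in> \<A>0\<close> ad0 by (intro exI[of _ "{}"]) auto
        next
          case False
          then obtain \<B> where "\<B> \<in> C" "B \<in> \<B>" using B by blast
          then show ?thesis using CP \<open>A \<in> \<A>0\<close> by blast
        qed
      next
        case False
        then obtain \<B>1 where B1: "\<B>1 \<in> C" "A \<in> \<B>1" using A by blast
        show ?thesis
        proof (cases "B \<in> \<A>0")
          case True then show ?thesis using CP B1 by blast
        next
          case False
          then obtain \<B>2 where B2: "\<B>2 \<in> C" "B \<in> \<B>2" using B by blast
          from chainsD[OF C B1(1) B2(1)] show ?thesis
            using CP B1 B2 by blast
        qed
      qed
      then show ?thesis using ne unfolding ADF_def by blast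
    qed
    have s1: "\<Union>C \<subseteq> JJ" using CP by blast
    have s2: "ADF (\<A>0 \<union> \<Union>C)" unfolding ADF_def using inf pair by blast
    show "\<Union>C \<in> P2" unfolding P2_def using s1 s2 by simp
  qed
  from Zorn_Lemma[OF this] obtain M where M: "M \<in> P2" and Mmax: "\<And>X. X \<in> P2 \<Longrightarrow> M \<subseteq> X \<Longrightarrow> X = M" by blast
  have adM: "ADF (\<A>0 \<union> M)" and MJ: "M \<subseteq> JJ" using M P2_def by auto
  have mad: "\<exists>A\<in>\<A>0 \<union> M. infinite (D \<inter> A)" if D: "D \<notin> JJ" for D
  proof (rule ccontr)
    assume "\<not> ?thesis"
    then have fD: "\<And>A. A \<in> \<A>0 \<union> M \<Longrightarrow> finite (D \<inter> A)" by blast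
    obtain E where ED: "E \<subseteq> D" and infE: "infinite E" and EJ: "E \<in> JJ" using Kx[OF D] by blast
    have fE: "finite (E \<inter> A)" if "A \<in> \<A>0 \<union> M" for A
      using fD[OF that] ED by (meson Int_mono finite_subset subset_refl)
    have EnA: "E \<notin> \<A>0 \<union> M" using fE infE by fastforce
    have "ADF (\<A>0 \<union> insert E M)"
      unfolding ADF_def
    proof (intro conjI ballI impI)
      fix A assume "A \<in> \<A>0 \<union> insert E M"
      then show "infinite A" using adM infE unfolding ADF_def by blast
    next
      fix A B assume A: "A \<in> \<A>0 \<union> insert E M" and B: "B \<in> \<A>0 \<union> insert E M" and ne: "A \<noteq> B"
      show "finite (A \<inter> B)"
      proof (cases "A = E")
        case True
        then have "B \<in> \<A>0 \<union> M" using B ne by blast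
        then show ?thesis using fE True by blast
      next
        case False
        then have A': "A \<in> \<A>0 \<union> M" using A by blast
        show ?thesis
        proof (cases "B = E")
          case True then show ?thesis using fE[OF A'] by (simp add: Int_commute)
        next
          case False
          then have "B \<in> \<A>0 \<union> M" using B by blast
          then show ?thesis using adM A' ne unfolding ADF_def by blast
        qed
      qed
    qed
    then have "insert E M \<in> P2" using MJ EJ P2_def by blast
    then have "insert E M = M" using Mmax by blast
    then show False using EnA by blast
  qed
  show ?thesis
    using adM MJ sub0 mad by (intro exI[of _ "\<A>0 \<union> M"]) auto
qed

lemma inf_fam:
  assumes un: "\<And>D E. D \<in> JJ \<Longrightarrow> E \<in> JJ \<Longrightarrow> D \<union> E \<in> JJ" and emp: "{} \<in> JJ"
    and univ: "UNIV \<notin> JJ" and sub: "\<A> \<subseteq> JJ"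
    and mad: "\<And>D. D \<notin> JJ \<Longrightarrow> \<exists>A\<in>\<A>. infinite (D \<inter> A)"
  shows "infinite \<A>"
proof
  assume fA: "finite \<A>"
  have UJ: "\<Union>\<A> \<in> JJ" using fA sub
  proof (induction \<A> rule: finite_induct)
    case empty then show ?case using emp by simp
  next
    case (insert x F) then show ?case using un by simp
  qed
  define D where "D = UNIV - \<Union>\<A>"
  have "D \<notin> JJ"
  proof
    assume "D \<in> JJ"
    then have "D \<union> \<Union>\<A> \<in> JJ" using un UJ by blast
    moreover have "D \<union> \<Union>\<A> = UNIV" using D_def by blast
    ultimately show False using univ by simp
  qed
  then obtain A where "A \<in> \<A>" "infinite (D \<inter> A)" using mad by blast
  moreover have "D \<inter> A = {}" using \<open>A \<in> \<A>\<close> D_def by blast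
  ultimately show False by simp
qed



lemma step:
  assumes ide: "is_ideal X I'" and hw: "hereditary_weak_P X I'"
    and sub: "\<And>D E. D \<in> JJ \<Longrightarrow> E \<subseteq> D \<Longrightarrow> E \<in> JJ"
    and KN: "\<And>z::'a \<Rightarrow> nat. \<exists>D\<in>JJ. {n\<in>X. z n \<in> D} \<notin> I'"
    and cA: "countable \<A>" and infA: "\<forall>A\<in>\<A>. infinite A"
  shows "\<exists>A. (finite A \<or> (A \<in> JJ \<and> infinite A \<and> (\<forall>B\<in>\<A>. finite (A \<inter> B)))) \<and>
           handled X I' z {B \<in> insert A \<A>. infinite B}"
proof (cases "\<exists>i. {n\<in>X. z n = i} \<notin> I'")
  case True
  then show ?thesis unfolding handled_def by (intro exI[of _ "{}"]) blast
next
  case False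
  then have fibX: "\<And>i. {n\<in>X. z n = i} \<in> I'" by blast
  obtain D where DJ: "D \<in> JJ" and EI: "{n\<in>X. z n \<in> D} \<notin> I'" using KN[of z] by blast
  define E where "E = {n\<in>X. z n \<in> D}"
  have Efib: "{n\<in>E. z n = i} \<in> I'" for i
    by (rule id_sub[OF ide fibX[of i]]) (auto simp: E_def)
  obtain C2 where C2E: "C2 \<subseteq> E" and C2I: "C2 \<notin> I'" and Cf2: "\<And>i. finite {n\<in>C2. z n = i}"
  proof -
    have EX: "E \<subseteq> X" using E_def by blast
    have EI': "E \<notin> I'" using EI E_def by simp
    show ?thesis using WP[OF ide hw EX EI' Efib] that by blast
  qed
  obtain a :: "nat \<Rightarrow> nat set" where Ara: "\<A> \<subseteq> range a" and raA: "range a \<subseteq> insert {} \<A>"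
  proof (cases "\<A> = {}")
    case True
    have "\<A> \<subseteq> range (\<lambda>_::nat. {}::nat set)" using True by simp
    moreover have "range (\<lambda>_::nat. {}::nat set) \<subseteq> insert {} \<A>" by auto
    ultimately show ?thesis by (rule that)
  next
    case False
    then have r: "range (from_nat_into \<A>) = \<A>" using range_from_nat_into[OF False cA] by simp
    show ?thesis by (rule that[of "from_nat_into \<A>"]) (simp_all add: r subset_insertI)
  qed
  have C2X: "C2 \<subseteq> X" using C2E E_def by blast
  show ?thesis
  proof (cases "\<exists>i. {n\<in>C2. z n \<in> a i} \<notin> I'")
    case True
    then obtain i where Si: "{n\<in>C2. z n \<in> a i} \<notin> I'" by blast
    have "{n\<in>C2. z n \<in> a i} \<noteq> {}" using Si id_empty[OF ide] by metis
    then have "a i \<noteq> {}" by blast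
    then have ai: "a i \<in> \<A>" using raA by blast
    then have aii: "a i \<in> {B \<in> insert {} \<A>. infinite B}" using infA by blast
    have f1: "finite {n\<in>{n\<in>C2. z n \<in> a i}. z n = j}" for j
      by (rule finite_subset[OF _ Cf2[of j]]) blast
    have "{n\<in>{n\<in>C2. z n \<in> a i}. z n \<notin> a i} = {}" by blast
    then have f2: "finite {n\<in>{n\<in>C2. z n \<in> a i}. z n \<notin> a i}" by (metis finite.emptyI)
    have "handled X I' z {B \<in> insert {} \<A>. infinite B}"
      unfolding handled_def
      by (rule disjI2, rule exI[of _ "{n\<in>C2. z n \<in> a i}"]) (use Si f1 f2 aii C2X in blast)
    then show ?thesis by (intro exI[of _ "{}"]) simp
  next
    case False
    then have aI: "\<And>i. {n\<in>C2. z n \<in> a i} \<in> I'" by blast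
    obtain C where CC2: "C \<subseteq> C2" and CI: "C \<notin> I'" and Cfa: "\<And>i. finite {n\<in>C. z n \<in> a i}"
    proof -
      define R where "R = {n\<in>C2. \<forall>i. z n \<notin> a i}"
      show ?thesis
      proof (cases "R \<in> I'")
        case False
        have "{n\<in>R. z n \<in> a i} = {}" for i using R_def by blast
        then show ?thesis using that[of R] False R_def by (metis (no_types, lifting) finite.emptyI mem_Collect_eq subsetI)
      next
        case True
        define C3 where "C3 = C2 - R"
        have C3I: "C3 \<notin> I'"
        proof
          assume "C3 \<in> I'"
          then have "C3 \<union> R \<in> I'" using id_Un[OF ide _ True] by blast
          moreover have "C2 \<subseteq> C3 \<union> R" using C3_def by blast
          ultimately show False using C2I id_sub[OF ide] by blast
        qed
        define k where "k n = (LEAST i. z n \<in> a i)" for n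
        have kin: "z n \<in> a (k n)" if "n \<in> C3" for n
        proof -
          have "\<exists>i. z n \<in> a i" using that C3_def R_def by blast
          then show ?thesis unfolding k_def by (rule LeastI_ex)
        qed
        have kfib: "{n\<in>C3. k n = i} \<in> I'" for i
        proof (rule id_sub[OF ide aI[of i]])
          show "{n\<in>C3. k n = i} \<subseteq> {n\<in>C2. z n \<in> a i}" using kin C3_def by blast
        qed
        have C3X: "C3 \<subseteq> X" using C3_def C2X by blast
        obtain C4 where C4: "C4 \<subseteq> C3" "C4 \<notin> I'" and Cf4: "\<And>i. finite {n\<in>C4. k n = i}"
          using WP[OF ide hw C3X C3I kfib] by blast
        have "finite {n\<in>C4. z n \<in> a i}" for i
        proof -
          have "{n\<in>C4. z n \<in> a i} \<subseteq> {n\<in>C4. k n \<in> {..i}}"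
            unfolding k_def by (auto intro: Least_le)
          moreover have "finite {n\<in>C4. k n \<in> {..i}}" by (rule fin_pre[OF Cf4]) simp
          ultimately show ?thesis using finite_subset by blast
        qed
        then show ?thesis using that[of C4] C4 C3_def by blast
      qed
    qed
    have CX: "C \<subseteq> X" using CC2 C2X by blast
    have Cf: "finite {n\<in>C. z n = i}" for i
      by (rule finite_subset[OF _ Cf2[of i]]) (use CC2 in blast)
    define A where "A = z ` C"
    have infC: "infinite C" using id_pos_infinite[OF ide CX CI] .
    have infAA: "infinite A"
    proof
      assume "finite A"
      then have "finite {n\<in>C. z n \<in> A}" using fin_pre[OF Cf] by blast
      moreover have "{n\<in>C. z n \<in> A} = C" using A_def by blast
      ultimately show False using infC by simp
    qed
    have AJ: "A \<in> JJ" by (rule sub[OF DJ]) (use CC2 C2E E_def A_def in blast)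
    have Afin: "finite (A \<inter> B)" if Bin: "B \<in> \<A>" for B
    proof -
      obtain i where "B = a i" using Ara Bin by blast
      then have "A \<inter> B \<subseteq> z ` {n\<in>C. z n \<in> a i}" using A_def by blast
      then show ?thesis using Cfa[of i] finite_subset by blast
    qed
    have "{n\<in>C. z n \<notin> A} = {}" using A_def by blast
    then have f2: "finite {n\<in>C. z n \<notin> A}" by (metis finite.emptyI)
    have Ain: "A \<in> {B \<in> insert A \<A>. infinite B}" using infAA by blast
    have "handled X I' z {B \<in> insert A \<A>. infinite B}"
      unfolding handled_def
      by (rule disjI2, rule exI[of _ C]) (use CX CI Cf f2 Ain in blast)
    then show ?thesis using AJ infAA Afin by blast
  qed
qed

lemma ev_fin:
  assumes "eventually (\<lambda>n. x n \<in> U) (inf cofinite (principal B))"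
  shows "finite {n\<in>B. x n \<notin> U}"
proof -
  have "finite {n. \<not> (n \<in> B \<longrightarrow> x n \<in> U)}"
    using assms unfolding eventually_inf_principal eventually_cofinite .
  moreover have "{n. \<not> (n \<in> B \<longrightarrow> x n \<in> U)} = {n\<in>B. x n \<notin> U}" by blast
  ultimately show ?thesis by simp
qed

lemma notfinbw_J:
  assumes ideJ: "is_ideal Y J" and g: "bij_betw g Y UNIV" and ad: "ADF \<A>" and sub: "\<A> \<subseteq> J0 Y J g"
    and mad: "\<And>D. D \<notin> J0 Y J g \<Longrightarrow> \<exists>A\<in>\<A>. infinite (D \<inter> A)"
  shows "\<not> FinBW Y J (mrowka \<A>)"
proof
  assume F: "FinBW Y J (mrowka \<A>)"
  define y where "y n = Pt (g n)" for n
  have "\<forall>n\<in>Y. y n \<in> topspace (mrowka \<A>)" by (simp add: topspace_mrowka y_def)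
  then obtain B L where BY: "B \<subseteq> Y" and BJ: "B \<notin> J"
    and lim: "limitin (mrowka \<A>) y L (inf cofinite (principal B))"
    using F unfolding FinBW_def by blast
  have ev: "finite {n\<in>B. y n \<notin> U}" if "openin (mrowka \<A>) U" "L \<in> U" for U
    using lim that unfolding limitin_def by (intro ev_fin) blast
  have Lt: "L \<in> range Pt \<union> Ast ` \<A> \<union> {Infty}" using lim unfolding limitin_def topspace_mrowka by blast
  have gi: "inj_on g Y" using g by (simp add: bij_betw_def)
  consider m where "L = Pt m" | A where "L = Ast A" "A \<in> \<A>" | "L = Infty" using Lt by blast
  then show False
  proof cases
    case (1 m)
    have f1: "finite {n\<in>B. y n \<notin> {Pt m}}" using ev[OF open_basis[OF basis_Pt]] 1 by simp
    have "{n\<in>B. g n = m} \<subseteq> g -` {m} \<inter> Y" using BY by blast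
    then have f2: "finite {n\<in>B. g n = m}" using finite_vimage_IntI[OF _ gi, of "{m}"] finite_subset by blast
    have "B \<subseteq> {n\<in>B. y n \<notin> {Pt m}} \<union> {n\<in>B. g n = m}" using y_def by auto
    then have "finite B" using f1 f2 finite_subset by blast
    then have "B \<in> J" using id_fin[OF ideJ BY] by blast
    then show False using BJ by simp
  next
    case (2 A)
    have f1: "finite {n\<in>B. y n \<notin> {Ast A} \<union> Pt ` (A - {})}"
      using ev[OF open_basis[OF basis_Ast[OF 2(2), of "{}"]]] 2 by simp
    have e: "{n\<in>B. y n \<notin> {Ast A} \<union> Pt ` (A - {})} = {n\<in>B. g n \<notin> A}" using y_def by auto
    have J1: "{n\<in>B. g n \<notin> A} \<in> J" using id_fin[OF ideJ _ f1[unfolded e]] BY by blast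
    have J2: "{n\<in>Y. g n \<in> A} \<in> J" using sub 2 unfolding J0_def by blast
    have "B \<subseteq> {n\<in>Y. g n \<in> A} \<union> {n\<in>B. g n \<notin> A}" using BY by blast
    then have "B \<in> J" using id_sub[OF ideJ id_Un[OF ideJ J2 J1]] by blast
    then show False using BJ by simp
  next
    case 3
    have "{n\<in>Y. g n \<in> g ` B} = B" using BY gi by (auto dest: inj_onD)
    then have "g ` B \<notin> J0 Y J g" using BJ unfolding J0_def by simp
    then obtain A where A: "A \<in> \<A>" and infi: "infinite (g ` B \<inter> A)" using mad by blast
    define U where "U = {Infty} \<union> Ast ` (\<A> - {A}) \<union> Pt ` (UNIV - ({} \<union> \<Union>{A}))"
    have Ub: "U \<in> mrowka_basis \<A>" unfolding U_def by (rule basis_Inf) (use A in auto)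
    have "L \<in> U" unfolding U_def 3 by blast
    then have f1: "finite {n\<in>B. y n \<notin> U}" using ev[OF open_basis[OF Ub]] by blast
    have "{n\<in>B. y n \<notin> U} = {n\<in>B. g n \<in> A}" using y_def U_def by auto
    then have "finite (g ` {n\<in>B. g n \<in> A})" using f1 by simp
    moreover have "g ` B \<inter> A \<subseteq> g ` {n\<in>B. g n \<in> A}" by blast
    ultimately show False using infi finite_subset by blast
  qed
qed



lemma ch_order:
  assumes ch: "CH"
  shows "\<exists>lt :: (nat set \<times> nat set) set. wf lt \<and> (\<forall>p q. p \<noteq> q \<longrightarrow> (p, q) \<in> lt \<or> (q, p) \<in> lt)
           \<and> (\<forall>q. countable {p. (p, q) \<in> lt})"
proof -
  obtain r :: "nat set rel" where wo: "Well_order r" and fr: "Field r = UNIV" using well_ordering[where 'a="nat set"] by blast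
  define s where "s = r - Id"
  have wfs: "wf s" using wo unfolding s_def well_order_on_def by blast
  have tot: "\<And>p q. p \<noteq> q \<Longrightarrow> (p, q) \<in> s \<or> (q, p) \<in> s"
  proof -
    fix p q :: "nat set" assume "p \<noteq> q"
    have "total_on (Field r) r" using wo unfolding well_order_on_def linear_order_on_def by blast
    then have "(p, q) \<in> r \<or> (q, p) \<in> r" using fr \<open>p \<noteq> q\<close> unfolding total_on_def by blast
    then show "(p, q) \<in> s \<or> (q, p) \<in> s" using \<open>p \<noteq> q\<close> s_def by blast
  qed
  define U where "U q = {p. (p, q) \<in> s}" for q
  show ?thesis
  proof (cases "\<forall>q. countable (U q)")
    case True
    then have c: "\<forall>q. countable {p. (p, q) \<in> s}" by (simp add: U_def)
    have t2: "\<forall>p q. p \<noteq> q \<longrightarrow> (p, q) \<in> s \<or> (q, p) \<in> s" using tot by blast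
    show ?thesis by (rule exI[of _ s]) (use wfs t2 c in simp)
  next
    case False
    then obtain a0 where a0: "a0 \<in> {q. \<not> countable (U q)}" by blast
    obtain a where a1: "a \<in> {q. \<not> countable (U q)}" and a2: "\<And>y. (y, a) \<in> s \<Longrightarrow> y \<notin> {q. \<not> countable (U q)}"
      by (rule wfE_min[OF wfs a0]) (rule that)
    have a: "\<not> countable (U a)" using a1 by simp
    have amin: "countable (U y)" if "(y, a) \<in> s" for y using a2[OF that] by simp
    have "U a \<approx> (UNIV :: nat set set)" using ch a unfolding CH_def by blast
    then obtain f where "bij_betw f (U a) (UNIV :: nat set set)" unfolding eqpoll_def by blast
    then have hb: "bij_betw (inv_into (U a) f) UNIV (U a)" by (rule bij_betw_inv_into)
    define h where "h = inv_into (U a) f"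
    have hinj: "inj h" and hU: "\<And>p. h p \<in> U a" using hb h_def by (auto simp: bij_betw_def)
    define lt where "lt = inv_image s h"
    have "wf lt" unfolding lt_def by (rule wf_inv_image[OF wfs])
    moreover have "\<forall>p q. p \<noteq> q \<longrightarrow> (p, q) \<in> lt \<or> (q, p) \<in> lt"
    proof (intro allI impI)
      fix p q :: "nat set" assume "p \<noteq> q"
      then have "h p \<noteq> h q" using hinj by (meson injD)
      then show "(p, q) \<in> lt \<or> (q, p) \<in> lt" using tot unfolding lt_def inv_image_def by blast
    qed
    moreover have "countable {p. (p, q) \<in> lt}" for q
    proof -
      have "(h q, a) \<in> s" using hU[of q] U_def by blast
      then have c: "countable (U (h q))" by (rule amin)
      have "h ` {p. (p, q) \<in> lt} \<subseteq> U (h q)" unfolding lt_def U_def by auto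
      then have "countable (h ` {p. (p, q) \<in> lt})" using c countable_subset by blast
      moreover have "inj_on h {p. (p, q) \<in> lt}" using hinj inj_on_subset by blast
      ultimately show ?thesis by (rule countable_image_inj_on)
    qed
    ultimately show ?thesis by blast
  qed
qed

definition dec :: "'a set \<Rightarrow> nat set \<Rightarrow> 'a \<Rightarrow> nat" where
  "dec X T n = (LEAST m. prod_encode (to_nat_on X n, m) \<in> T)"

lemma dec_surj:
  assumes cX: "countable X"
  shows "\<exists>T. \<forall>n\<in>X. dec X T n = z n"
proof -
  define T where "T = (\<lambda>n. prod_encode (to_nat_on X n, z n)) ` X"
  have "dec X T n = z n" if n: "n \<in> X" for n
    unfolding dec_def
  proof (rule Least_equality)
    show "prod_encode (to_nat_on X n, z n) \<in> T" unfolding T_def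
      by (rule imageI[OF n])
  next
    fix m assume "prod_encode (to_nat_on X n, m) \<in> T"
    then obtain n' where n': "n' \<in> X" "prod_encode (to_nat_on X n, m) = prod_encode (to_nat_on X n', z n')"
      unfolding T_def by (rule imageE)
    then have "(to_nat_on X n, m) = (to_nat_on X n', z n')"
      using prod_encode_eq by blast
    then have "to_nat_on X n' = to_nat_on X n" "z n' = m" by simp_all
    then have "n' = n" using inj_on_to_nat_on[OF cX] n' n by (meson inj_onD)
    then show "z n \<le> m" using \<open>z n' = m\<close> by simp
  qed
  then show ?thesis by blast
qed

lemma handled_mono: "handled X I' z \<A> \<Longrightarrow> \<A> \<subseteq> \<A>' \<Longrightarrow> handled X I' z \<A>'"
  unfolding handled_def by blast

lemma handled_cong:
  assumes eq: "\<And>n. n \<in> X \<Longrightarrow> z n = z' n" and h: "handled X I' z \<A>"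
  shows "handled X I' z' \<A>"
proof -
  have e1: "{n\<in>C. z n = i} = {n\<in>C. z' n = i}" if "C \<subseteq> X" for C i using eq that by auto
  have e2: "{n\<in>C. z n \<notin> A} = {n\<in>C. z' n \<notin> A}" if "C \<subseteq> X" for C A using eq that by auto
  show ?thesis using h unfolding handled_def
  proof (elim disjE exE conjE)
    fix i assume "{n\<in>X. z n = i} \<notin> I'"
    then show "(\<exists>i. {n\<in>X. z' n = i} \<notin> I') \<or> (\<exists>C\<subseteq>X. C \<notin> I' \<and> (\<forall>i. finite {n\<in>C. z' n = i}) \<and> (\<exists>A\<in>\<A>. finite {n\<in>C. z' n \<notin> A}))"
      using e1[of X i] by auto
  next
    fix C assume C: "C \<subseteq> X" "C \<notin> I'" "\<forall>i. finite {n\<in>C. z n = i}" "\<exists>A\<in>\<A>. finite {n\<in>C. z n \<notin> A}"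
    then show "(\<exists>i. {n\<in>X. z' n = i} \<notin> I') \<or> (\<exists>C\<subseteq>X. C \<notin> I' \<and> (\<forall>i. finite {n\<in>C. z' n = i}) \<and> (\<exists>A\<in>\<A>. finite {n\<in>C. z' n \<notin> A}))"
    proof -
      obtain A where A: "A \<in> \<A>" "finite {n\<in>C. z n \<notin> A}" using C(4) by blast
      have f1: "\<forall>i. finite {n\<in>C. z' n = i}" using C(3) e1[OF C(1)] by simp
      have f2: "finite {n\<in>C. z' n \<notin> A}" using A(2) e2[OF C(1)] by simp
      show ?thesis by (rule disjI2, rule exI[of _ C]) (use C(1,2) f1 f2 A(1) in blast)
    qed
  qed
qed

definition fam :: "nat set set \<Rightarrow> nat set set" where
  "fam S = {A\<in>S. infinite A}"

lemma zorn1: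
  fixes lt :: "(nat set \<times> nat set) set" and X :: "'a set"
  assumes wflt: "wf lt" and tot: "\<And>p q. p \<noteq> q \<Longrightarrow> (p, q) \<in> lt \<or> (q, p) \<in> lt"
    and cnt: "\<And>q. countable {p. (p, q) \<in> lt}"
    and stp: "\<And>\<A> (z::'a \<Rightarrow> nat). countable \<A> \<Longrightarrow> \<forall>A\<in>\<A>. infinite A \<Longrightarrow>
       \<exists>A. (finite A \<or> (A \<in> JJ \<and> infinite A \<and> (\<forall>B\<in>\<A>. finite (A \<inter> B)))) \<and>
           handled X I' z {B \<in> insert A \<A>. infinite B}"
  shows "\<exists>\<A>. ADF \<A> \<and> \<A> \<subseteq> JJ \<and> (\<forall>T. handled X I' (dec X T) \<A>)"
proof -
  define P where "P = {R :: (nat set \<times> nat set) set. single_valued R \<and>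
      (\<forall>q\<in>Domain R. \<forall>p. (p, q) \<in> lt \<longrightarrow> p \<in> Domain R) \<and> ADF (fam (Range R)) \<and>
      fam (Range R) \<subseteq> JJ \<and> (\<forall>q\<in>Domain R. handled X I' (dec X q) (fam (Range R)))}"
  have "\<forall>C\<in>chains P. \<Union>C \<in> P"
  proof
    fix C assume C: "C \<in> chains P"
    have CP: "\<And>R. R \<in> C \<Longrightarrow> R \<in> P" using chainsD2[OF C] by blast
    have famsub: "fam (Range R) \<subseteq> fam (Range (\<Union>C))" if "R \<in> C" for R
      using that unfolding fam_def by blast
    have famU: "A \<in> fam (Range (\<Union>C)) \<Longrightarrow> \<exists>R\<in>C. A \<in> fam (Range R)" for A
      unfolding fam_def by blast
    have sv: "single_valued (\<Union>C)"
      unfolding single_valued_def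
    proof (intro allI impI)
      fix x y w assume xy: "(x, y) \<in> \<Union>C" and xw: "(x, w) \<in> \<Union>C"
      then obtain R1 R2 where R1: "R1 \<in> C" "(x, y) \<in> R1" and R2: "R2 \<in> C" "(x, w) \<in> R2" by blast
      from chainsD[OF C R1(1) R2(1)] show "y = w"
      proof
        assume "R1 \<subseteq> R2"
        then show ?thesis using R1 R2 CP[OF R2(1)] unfolding P_def single_valued_def by blast
      next
        assume "R2 \<subseteq> R1"
        then show ?thesis using R1 R2 CP[OF R1(1)] unfolding P_def single_valued_def by blast
      qed
    qed
    have dc: "\<forall>q\<in>Domain (\<Union>C). \<forall>p. (p, q) \<in> lt \<longrightarrow> p \<in> Domain (\<Union>C)"
    proof (intro ballI allI impI)
      fix q p assume "q \<in> Domain (\<Union>C)" "(p, q) \<in> lt"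
      then obtain R where "R \<in> C" "q \<in> Domain R" by blast
      then have "p \<in> Domain R" using CP \<open>(p, q) \<in> lt\<close> unfolding P_def by blast
      then show "p \<in> Domain (\<Union>C)" using \<open>R \<in> C\<close> by blast
    qed
    have ad: "ADF (fam (Range (\<Union>C)))"
      unfolding ADF_def
    proof (intro conjI ballI impI)
      fix A assume "A \<in> fam (Range (\<Union>C))" then show "infinite A" unfolding fam_def by blast
    next
      fix A B assume A: "A \<in> fam (Range (\<Union>C))" and B: "B \<in> fam (Range (\<Union>C))" and ne: "A \<noteq> B"
      obtain R1 where R1: "R1 \<in> C" "A \<in> fam (Range R1)" using famU[OF A] by blast
      obtain R2 where R2: "R2 \<in> C" "B \<in> fam (Range R2)" using famU[OF B] by blast
      have "\<exists>R\<in>C. A \<in> fam (Range R) \<and> B \<in> fam (Range R)"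
      proof (cases "R1 \<subseteq> R2")
        case True
        then have "fam (Range R1) \<subseteq> fam (Range R2)" unfolding fam_def by blast
        then show ?thesis using R1 R2 by blast
      next
        case False
        then have "R2 \<subseteq> R1" using chainsD[OF C R1(1) R2(1)] by blast
        then have "fam (Range R2) \<subseteq> fam (Range R1)" unfolding fam_def by blast
        then show ?thesis using R1 R2 by blast
      qed
      then obtain R where "R \<in> C" "A \<in> fam (Range R)" "B \<in> fam (Range R)" by blast
      moreover have "ADF (fam (Range R))" using CP[OF \<open>R \<in> C\<close>] unfolding P_def by blast
      ultimately show "finite (A \<inter> B)" using ne unfolding ADF_def by blast
    qed
    have sj: "fam (Range (\<Union>C)) \<subseteq> JJ"
    proof
      fix A assume "A \<in> fam (Range (\<Union>C))"
      then obtain R where "R \<in> C" "A \<in> fam (Range R)" using famU by blast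
      then show "A \<in> JJ" using CP unfolding P_def by blast
    qed
    have hd: "\<forall>q\<in>Domain (\<Union>C). handled X I' (dec X q) (fam (Range (\<Union>C)))"
    proof
      fix q assume "q \<in> Domain (\<Union>C)"
      then obtain R where R: "R \<in> C" "q \<in> Domain R" by blast
      then have "handled X I' (dec X q) (fam (Range R))" using CP unfolding P_def by blast
      then show "handled X I' (dec X q) (fam (Range (\<Union>C)))" using handled_mono famsub[OF R(1)] by blast
    qed
    show "\<Union>C \<in> P" unfolding P_def using sv dc ad sj hd by blast
  qed
  from Zorn_Lemma[OF this] obtain M where M: "M \<in> P" and Mmax: "\<And>R. R \<in> P \<Longrightarrow> M \<subseteq> R \<Longrightarrow> R = M" by blast
  have Msv: "single_valued M" and Mdc: "\<forall>q\<in>Domain M. \<forall>p. (p, q) \<in> lt \<longrightarrow> p \<in> Domain M"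
    and Mad: "ADF (fam (Range M))" and MJ: "fam (Range M) \<subseteq> JJ"
    and Mhd: "\<forall>q\<in>Domain M. handled X I' (dec X q) (fam (Range M))" using M unfolding P_def by auto
  have DomU: "Domain M = UNIV"
  proof (rule ccontr)
    assume "Domain M \<noteq> UNIV"
    then obtain a0 where a0: "a0 \<in> - Domain M" by blast
    obtain \<alpha> where a1: "\<alpha> \<in> - Domain M" and a2: "\<And>y. (y, \<alpha>) \<in> lt \<Longrightarrow> y \<notin> - Domain M"
      by (rule wfE_min[OF wflt a0]) (rule that)
    have \<alpha>: "\<alpha> \<notin> Domain M" using a1 by simp
    have amin: "y \<in> Domain M" if "(y, \<alpha>) \<in> lt" for y using a2[OF that] by simp
    have DM: "Domain M \<subseteq> {p. (p, \<alpha>) \<in> lt}"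
    proof
      fix q assume q: "q \<in> Domain M"
      show "q \<in> {p. (p, \<alpha>) \<in> lt}"
      proof (rule ccontr)
        assume "q \<notin> {p. (p, \<alpha>) \<in> lt}"
        moreover have "q \<noteq> \<alpha>" using q \<alpha> by blast
        ultimately have "(\<alpha>, q) \<in> lt" using tot by blast
        then have "\<alpha> \<in> Domain M" using Mdc q by blast
        then show False using \<alpha> by simp
      qed
    qed
    have cD: "countable (Domain M)" using countable_subset[OF DM cnt] .
    have "Range M \<subseteq> (\<lambda>q. SOME b. (q, b) \<in> M) ` Domain M"
    proof
      fix b assume "b \<in> Range M"
      then obtain q where qb: "(q, b) \<in> M" by (rule RangeE)
      have "(q, SOME b. (q, b) \<in> M) \<in> M" using someI[of "\<lambda>b. (q, b) \<in> M", OF qb] .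
      then have eq: "(SOME b. (q, b) \<in> M) = b" by (rule single_valuedD[OF Msv _ qb])
      have qd: "q \<in> Domain M" using qb by (rule DomainI)
      show "b \<in> (\<lambda>q. SOME b. (q, b) \<in> M) ` Domain M"
        by (rule image_eqI[where x=q]) (use eq qd in simp_all)
    qed
    then have cR: "countable (Range M)" by (rule countable_subset[OF _ countable_image[OF cD]])
    have "fam (Range M) \<subseteq> Range M" unfolding fam_def by blast
    then have cF: "countable (fam (Range M))" by (rule countable_subset[OF _ cR])
    have iF: "\<forall>A\<in>fam (Range M). infinite A" unfolding fam_def by blast
    obtain A where A: "finite A \<or> (A \<in> JJ \<and> infinite A \<and> (\<forall>B\<in>fam (Range M). finite (A \<inter> B)))"
      and Ah: "handled X I' (dec X \<alpha>) {B \<in> insert A (fam (Range M)). infinite B}"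
      using stp[OF cF iF] by blast
    define M' where "M' = insert (\<alpha>, A) M"
    have RM': "Range M' = insert A (Range M)" unfolding M'_def by auto
    have famM': "fam (Range M') = {B \<in> insert A (fam (Range M)). infinite B}"
      unfolding RM' fam_def by blast
    have "M' \<in> P"
      unfolding P_def
    proof (intro CollectI conjI)
      show "single_valued M'" using Msv \<alpha> unfolding M'_def single_valued_def by blast
    next
      show "\<forall>q\<in>Domain M'. \<forall>p. (p, q) \<in> lt \<longrightarrow> p \<in> Domain M'"
        using Mdc amin unfolding M'_def by auto
    next
      show "ADF (fam (Range M'))"
      proof (cases "finite A")
        case True
        have "{B \<in> insert A (fam (Range M)). infinite B} = fam (Range M)" using True unfolding fam_def by auto
        then have "fam (Range M') = fam (Range M)" using famM' by simp
        then show ?thesis using Mad by simp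
      next
        case False
        then have AJ: "A \<in> JJ" and Af: "\<forall>B\<in>fam (Range M). finite (A \<inter> B)" using A by auto
        show ?thesis unfolding ADF_def famM'
        proof (intro conjI ballI impI)
          fix B assume "B \<in> {B \<in> insert A (fam (Range M)). infinite B}" then show "infinite B" by blast
        next
          fix B1 B2 assume B1: "B1 \<in> {B \<in> insert A (fam (Range M)). infinite B}"
            and B2: "B2 \<in> {B \<in> insert A (fam (Range M)). infinite B}" and ne: "B1 \<noteq> B2"
          show "finite (B1 \<inter> B2)"
          proof (cases "B1 = A")
            case True
            then have "B2 \<in> fam (Range M)" using B2 ne by blast
            then show ?thesis using Af True by blast
          next
            case False
            then have B1': "B1 \<in> fam (Range M)" using B1 by blast
            show ?thesis
            proof (cases "B2 = A")
              case True
              have "finite (A \<inter> B1)" using Af B1' by blast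
              then show ?thesis using True by (simp add: Int_commute)
            next
              case False
              then have "B2 \<in> fam (Range M)" using B2 by blast
              then show ?thesis using Mad B1' ne unfolding ADF_def by blast
            qed
          qed
        qed
      qed
    next
      show "fam (Range M') \<subseteq> JJ" using MJ A unfolding famM' by auto
    next
      show "\<forall>q\<in>Domain M'. handled X I' (dec X q) (fam (Range M'))"
      proof
        fix q assume "q \<in> Domain M'"
        then have "q = \<alpha> \<or> q \<in> Domain M" unfolding M'_def by auto
        then show "handled X I' (dec X q) (fam (Range M'))"
        proof
          assume "q = \<alpha>" then show ?thesis using Ah famM' by simp
        next
          assume "q \<in> Domain M"
          then have "handled X I' (dec X q) (fam (Range M))" using Mhd by blast
          moreover have "fam (Range M) \<subseteq> fam (Range M')" unfolding RM' fam_def by blast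
          ultimately show ?thesis using handled_mono by blast
        qed
      qed
    qed
    moreover have "M \<subseteq> M'" unfolding M'_def by blast
    ultimately have "M' = M" using Mmax by blast
    then show False using \<alpha> unfolding M'_def by blast
  qed
  show ?thesis using Mad MJ Mhd DomU by blast
qed



theorem theorem9p3:
  fixes X :: "'a set" and Y :: "'b set"
    and I I' :: "'a set set" and J :: "'b set set"
  assumes "CH"
    and "is_ideal X I" and "is_ideal Y J" and "is_ideal X I'"
    and "I \<subseteq> I'" and "hereditary_weak_P X I'"
    and "\<not> katetov_le J I'"
  shows "\<exists>\<A>. almost_disjoint_family \<A> \<and> FinBW X I (mrowka \<A>) \<and> \<not> FinBW Y J (mrowka \<A>)"
proof -
  note ch = assms(1) and ideI = assms(2) and ideJ = assms(3) and ide = assms(4)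
    and II = assms(5) and hw = assms(6) and nk = assms(7)
  have cY: "countable Y" using id_countable[OF ideJ] .
  have iY: "infinite Y" using id_infinite[OF ideJ] .
  define g where "g = to_nat_on Y"
  have gb: "bij_betw g Y UNIV" using to_nat_on_infinite[OF cY iY] g_def by simp
  have gi: "inj_on g Y" using gb by (simp add: bij_betw_def)
  define JJ where "JJ = J0 Y J g"
  have sub: "\<And>D E. D \<in> JJ \<Longrightarrow> E \<subseteq> D \<Longrightarrow> E \<in> JJ" unfolding JJ_def using J0_sub[OF ideJ] by blast
  have un: "\<And>D E. D \<in> JJ \<Longrightarrow> E \<in> JJ \<Longrightarrow> D \<union> E \<in> JJ" unfolding JJ_def using J0_Un[OF ideJ] by blast
  have fin: "\<And>D. finite D \<Longrightarrow> D \<in> JJ" unfolding JJ_def using J0_fin[OF ideJ gi] by blast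
  have emp: "{} \<in> JJ" using fin by simp
  have univ: "UNIV \<notin> JJ" unfolding JJ_def using J0_UNIV[OF ideJ] by blast
  have KN: "\<And>z::'a \<Rightarrow> nat. \<exists>D\<in>JJ. {n\<in>X. z n \<in> D} \<notin> I'"
    unfolding JJ_def using kat_nat[OF ide ideJ nk gb] by blast
  have Kx: "\<And>D. D \<notin> JJ \<Longrightarrow> \<exists>E\<subseteq>D. infinite E \<and> E \<in> JJ"
    by (rule K1[OF ide sub fin KN])
  obtain lt :: "(nat set \<times> nat set) set" where wflt: "wf lt"
    and tot: "\<forall>p q. p \<noteq> q \<longrightarrow> (p, q) \<in> lt \<or> (q, p) \<in> lt"
    and cnt: "\<forall>q. countable {p. (p, q) \<in> lt}" using ch_order[OF ch] by blast
  have stp: "\<And>\<A> (z::'a \<Rightarrow> nat). countable \<A> \<Longrightarrow> \<forall>A\<in>\<A>. infinite A \<Longrightarrow>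
       \<exists>A. (finite A \<or> (A \<in> JJ \<and> infinite A \<and> (\<forall>B\<in>\<A>. finite (A \<inter> B)))) \<and>
           handled X I' z {B \<in> insert A \<A>. infinite B}"
    by (rule step[OF ide hw sub KN])
  obtain \<A>0 where ad0: "ADF \<A>0" and sub0: "\<A>0 \<subseteq> JJ" and hd0: "\<forall>T. handled X I' (dec X T) \<A>0"
    using zorn1[of lt JJ X I', OF wflt _ _ stp] tot cnt by blast
  obtain \<A> where A0A: "\<A>0 \<subseteq> \<A>" and ad: "ADF \<A>" and subA: "\<A> \<subseteq> JJ"
    and mad: "\<forall>D. D \<notin> JJ \<longrightarrow> (\<exists>A\<in>\<A>. infinite (D \<inter> A))"
    using mad_ext[OF Kx ad0 sub0] by blast
  have hd: "handled X I' z \<A>" for z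
  proof -
    obtain T where T: "\<forall>n\<in>X. dec X T n = z n" using dec_surj[OF id_countable[OF ide]] by blast
    have "handled X I' (dec X T) \<A>" using handled_mono hd0 A0A by blast
    then show ?thesis using handled_cong[of X "dec X T" z] T by blast
  qed
  have infA: "infinite \<A>" using inf_fam[OF un emp univ subA] mad by blast
  have "almost_disjoint_family \<A>"
    using infA ad unfolding almost_disjoint_family_def ADF_def by blast
  moreover have "FinBW X I (mrowka \<A>)" using finbw_I[OF ideI ide II hw ad hd] .
  moreover have "\<not> FinBW Y J (mrowka \<A>)"
    using notfinbw_J[OF ideJ gb ad subA[unfolded JJ_def]] mad unfolding JJ_def by blast
  ultimately show ?thesis by blast
qed

end
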